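(* Let $H\sim\mathcal{N}(0,\Sigma)$ be a random $M\times N$ matrix, and let $Q^{(1)},Q^{(2)}$ be two capacity-achieving covariance matrices (both maximizers of $C$ over $\{Q\ge0,\ \mathrm{tr}(Q)\le p\}$) with $\mathrm{tr}(Q^{(1)})=p=\mathrm{tr}(Q^{(2)})$. Then $HQ^{(1)}H^H=HQ^{(2)}H^H$ almost surely with respect to the law of $H$.
   Context: Fix integers $M,N\ge1$, noise variance $\sigma_n^2>0$ and power $p>0$. We identify $\mathbb{M}(M,\mathbb{C})\otimes\mathbb{M}(N,\mathbb{C})$ with $\mathbb{M}(MN,\mathbb{C})$ via $(A\otimes B)_{(i,j),(l,m)}=A_{il}B_{jm}$. $H\sim\mathcal{N}(0,\Sigma)$ means: $H$ is a random $M\times N$ complex matrix whose entries are jointly zero-mean circularly symmetric complex Gaussian, with covariance $\Sigma_{(i,j),(l,m)}=\mathcal{E}(H_{ij}\overline{H_{lm}})$. For positive semidefinite $Q\in\mathbb{M}(N,\mathbb{C})$, $C(Q):=\mathcal{E}\big(\log\det(\mathbf{1}_M+\sigma_n^{-2}HQH^H)\big)$. *)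

theory Defs
  imports "HOL-Probability.Probability"
begin

definition mat_adj :: "complex^'n^'m \<Rightarrow> complex^'m^'n" where
  "mat_adj A = (\<chi> i j. cnj (A $ j $ i))"

definition mtrace :: "complex^'n^'n \<Rightarrow> complex" where
  "mtrace A = (\<Sum>i\<in>UNIV. A $ i $ i)"

definition cpsd :: "complex^'n^'n \<Rightarrow> bool" where
  "cpsd A \<longleftrightarrow> mat_adj A = A \<and>
     (\<forall>x::complex^'n. 0 \<le> Re (\<Sum>i\<in>UNIV. \<Sum>j\<in>UNIV. cnj (x $ i) * A $ i $ j * x $ j))"

definition cov_psd :: "('m::finite \<times> 'n::finite \<Rightarrow> 'm \<times> 'n \<Rightarrow> complex) \<Rightarrow> bool" where
  "cov_psd S \<longleftrightarrow> (\<forall>k l. S l k = cnj (S k l)) \<and>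
     (\<forall>a. 0 \<le> Re (\<Sum>k\<in>UNIV. \<Sum>l\<in>UNIV. cnj (a k) * S k l * a l))"

text \<open>The law of a zero-mean circularly symmetric complex Gaussian random M x N matrix
  with covariance S (S (i,j) (l,m) = E(H_ij conj H_lm)), given by its characteristic
  function: E exp(i Re(a^H h)) = exp(-a^H S a / 4).\<close>
definition cscg_law :: "(complex^'n::finite^'m::finite) measure \<Rightarrow>
     ('m \<times> 'n \<Rightarrow> 'm \<times> 'n \<Rightarrow> complex) \<Rightarrow> bool" where
  "cscg_law \<mu> S \<longleftrightarrow> prob_space \<mu> \<and> sets \<mu> = sets borel \<and>
     (\<forall>a::complex^'n^'m.
        integral\<^sup>L \<mu> (\<lambda>H. exp (\<i> * complex_of_real
            (Re (\<Sum>i\<in>UNIV. \<Sum>j\<in>UNIV. cnj (a $ i $ j) * H $ i $ j))))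
        = exp (- (\<Sum>k\<in>UNIV. \<Sum>l\<in>UNIV. cnj (a $ fst k $ snd k) * S k l * a $ fst l $ snd l) / 4))"

definition capacity :: "(complex^'n::finite^'m::finite) measure \<Rightarrow> real \<Rightarrow> complex^'n^'n \<Rightarrow> real" where
  "capacity \<mu> s2 Q = (\<integral>H. ln (Re (det (mat 1 + (1 / s2) *\<^sub>R (H ** Q ** mat_adj H)))) \<partial>\<mu>)"

definition capacity_achieving ::
  "(complex^'n::finite^'m::finite) measure \<Rightarrow> real \<Rightarrow> real \<Rightarrow> complex^'n^'n \<Rightarrow> bool" where
  "capacity_achieving \<mu> s2 p Q \<longleftrightarrow> cpsd Q \<and> Re (mtrace Q) \<le> p \<and>
     (\<forall>Q'. cpsd Q' \<and> Re (mtrace Q') \<le> p \<longrightarrow> capacity \<mu> s2 Q' \<le> capacity \<mu> s2 Q)"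

end

theory Submission
  imports Defs
begin


definition cip :: "complex^'n \<Rightarrow> complex^'n \<Rightarrow> complex" where
  "cip x y = (\<Sum>i\<in>UNIV. cnj (x$i) * y$i)"

definition qf :: "complex^'n^'n \<Rightarrow> complex^'n \<Rightarrow> complex^'n \<Rightarrow> complex" where
  "qf X x y = cip x (X *v y)"

definition herm :: "complex^'n^'n \<Rightarrow> bool" where
  "herm X \<longleftrightarrow> (\<forall>i j. X$j$i = cnj (X$i$j))"

definition pdm :: "complex^'n^'n \<Rightarrow> bool" where
  "pdm X \<longleftrightarrow> herm X \<and> (\<forall>x. x \<noteq> 0 \<longrightarrow> Re (qf X x x) > 0)"

lemma qf_expand: "qf X x y = (\<Sum>i\<in>UNIV. \<Sum>j\<in>UNIV. cnj (x $ i) * X $ i $ j * y $ j)"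
  unfolding qf_def cip_def matrix_vector_mult_def
  by (simp add: sum_distrib_left mult.assoc)

lemma herm_adj: "herm X \<longleftrightarrow> mat_adj X = X"
proof -
  have "(\<forall>i j. X$j$i = cnj (X$i$j)) \<longleftrightarrow> (\<forall>i j. cnj (X$j$i) = X$i$j)"
    by (metis complex_cnj_cnj)
  then show ?thesis unfolding herm_def mat_adj_def vec_eq_iff by simp
qed

lemma cpsd_iff: "cpsd A \<longleftrightarrow> herm A \<and> (\<forall>x. 0 \<le> Re (qf A x x))"
  unfolding cpsd_def herm_adj qf_expand ..

lemma cip_zero_left[simp]: "cip 0 y = 0" by (simp add: cip_def)
lemma cip_zero_right[simp]: "cip x 0 = 0" by (simp add: cip_def)

lemma cip_add_right: "cip x (y + z) = cip x y + cip x z"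
  by (simp add: cip_def distrib_left sum.distrib)
lemma cip_add_left: "cip (x + y) z = cip x z + cip y z"
  by (simp add: cip_def distrib_right sum.distrib)
lemma cip_diff_right: "cip x (y - z) = cip x y - cip x z"
  by (simp add: cip_def right_diff_distrib sum_subtractf)
lemma cip_diff_left: "cip (x - y) z = cip x z - cip y z"
  by (simp add: cip_def left_diff_distrib sum_subtractf)
lemma cip_scale_right: "cip x (c *s y) = c * cip x y"
  by (simp add: cip_def sum_distrib_left algebra_simps)
lemma cip_scale_left: "cip (c *s x) y = cnj c * cip x y"
  by (simp add: cip_def sum_distrib_left algebra_simps)
lemma cip_sum_right: "cip x (\<Sum>a\<in>A. f a) = (\<Sum>a\<in>A. cip x (f a))"
  by (induction A rule: infinite_finite_induct) (auto simp: cip_add_right)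
lemma cip_sum_left: "cip (\<Sum>a\<in>A. f a) y = (\<Sum>a\<in>A. cip (f a) y)"
  by (induction A rule: infinite_finite_induct) (auto simp: cip_add_left)

lemma qf_zero_left[simp]: "qf X 0 y = 0" by (simp add: qf_def)
lemma qf_zero_right[simp]: "qf X x 0 = 0" by (simp add: qf_def matrix_vector_mult_0_right)
lemma qf_add_right: "qf X x (y + z) = qf X x y + qf X x z"
  by (simp add: qf_def matrix_vector_right_distrib cip_add_right)
lemma qf_add_left: "qf X (x + y) z = qf X x z + qf X y z"
  by (simp add: qf_def cip_add_left)
lemma qf_diff_right: "qf X x (y - z) = qf X x y - qf X x z"
  by (simp add: qf_def matrix_vector_mult_diff_distrib cip_diff_right)
lemma qf_diff_left: "qf X (x - y) z = qf X x z - qf X y z"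
  by (simp add: qf_def cip_diff_left)
lemma qf_scale_right: "qf X x (c *s y) = c * qf X x y"
proof -
  have "X *v (c *s y) = c *s (X *v y)"
    by (simp add: matrix_vector_mult_def vec_eq_iff sum_distrib_left algebra_simps)
  then show ?thesis by (simp add: qf_def cip_scale_right)
qed
lemma qf_scale_left: "qf X (c *s x) y = cnj c * qf X x y"
  by (simp add: qf_def cip_scale_left)
lemma qf_sum_right: "qf X x (\<Sum>a\<in>A. f a) = (\<Sum>a\<in>A. qf X x (f a))"
  by (induction A rule: infinite_finite_induct) (auto simp: qf_add_right)
lemma qf_sum_left: "qf X (\<Sum>a\<in>A. f a) y = (\<Sum>a\<in>A. qf X (f a) y)"
  by (induction A rule: infinite_finite_induct) (auto simp: qf_add_left)

lemma qf_herm: assumes "herm X" shows "qf X y x = cnj (qf X x y)"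
proof -
  have hc: "\<And>i j. cnj (X$i$j) = X$j$i" using assms unfolding herm_def by metis
  have "cnj (qf X x y) = (\<Sum>i\<in>UNIV. \<Sum>j\<in>UNIV. x$i * X$j$i * cnj (y$j))"
    unfolding qf_expand by (simp add: cnj_sum hc)
  also have "\<dots> = (\<Sum>j\<in>UNIV. \<Sum>i\<in>UNIV. x$i * X$j$i * cnj (y$j))"
    by (rule sum.swap)
  also have "\<dots> = qf X y x"
    unfolding qf_expand by (intro sum.cong refl) (simp add: mult_ac)
  finally show ?thesis by simp
qed

lemma qf_herm_real: "herm X \<Longrightarrow> qf X x x = complex_of_real (Re (qf X x x))"
  using qf_herm[of X x x] by (metis Reals_cnj_iff complex_is_Real_iff of_real_Re)

lemma qf_mat_add: "qf (X + Y) x y = qf X x y + qf Y x y"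
  unfolding qf_expand by (simp add: algebra_simps sum.distrib)
lemma qf_mat_scaleR: "qf (c *\<^sub>R X) x y = complex_of_real c * qf X x y"
proof -
  have "(c *\<^sub>R X) $ i $ j = complex_of_real c * X $ i $ j" for i j
    unfolding vector_scaleR_component by (simp add: scaleR_conv_of_real)
  then show ?thesis unfolding qf_expand by (simp add: sum_distrib_left algebra_simps)
qed

lemma qf_axis: "qf X (axis i 1) (axis j 1) = X $ i $ j"
proof -
  have "qf X (axis i 1) (axis j 1) = (\<Sum>a\<in>UNIV. \<Sum>b\<in>UNIV. (if b = j then (if a = i then X $ a $ b else 0) else 0))"
    unfolding qf_expand axis_def by (intro sum.cong refl) auto
  also have "\<dots> = X $ i $ j" by simp
  finally show ?thesis .
qed

lemma congr_entry: "(mat_adj T ** X ** T) $ a $ b = qf X (column a T) (column b T)"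
  unfolding qf_expand mat_adj_def matrix_matrix_mult_def column_def
  apply (simp add: sum_distrib_left sum_distrib_right mult.assoc)
  apply (subst sum.swap) by (simp add: mult.commute mult.left_commute)

lemma det_cnj: "det (\<chi> i j. cnj (A $ i $ j)) = cnj (det A)"
  unfolding det_def by (simp add: cnj_sum cnj_prod)

lemma det_adj: "det (mat_adj A) = cnj (det A)"
proof -
  have "mat_adj A = transpose (\<chi> i j. cnj (A $ i $ j))"
    by (simp add: mat_adj_def transpose_def)
  then show ?thesis by (simp add: det_cnj)
qed

lemma det_triang:
  fixes A :: "'a::comm_ring_1^'n^'n" and idx :: "'n \<Rightarrow> nat"
  assumes inj: "inj idx" and ld: "\<And>i j. idx i > idx j \<Longrightarrow> A$i$j = 0"
  shows "det A = prod (\<lambda>i. A$i$i) (UNIV:: 'n set)"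
proof -
  let ?U = "UNIV:: 'n set"
  let ?PU = "{p. p permutes ?U}"
  let ?pp = "(\<lambda>p. of_int (sign p) * prod (\<lambda>i. A$i$p i) (UNIV :: 'n set))"
  have fU: "finite ?U"
    by simp
  have id0: "{id} \<subseteq> ?PU"
    by (auto simp: permutes_id)
  have p0: "\<forall>p \<in> ?PU -{id}. ?pp p = 0"
  proof
    fix p
    assume p: "p \<in> ?PU - {id}"
    have "\<exists>i. idx (p i) < idx i"
    proof (rule ccontr)
      assume "\<not> ?thesis"
      then have le: "\<And>i. idx i \<le> idx (p i)" by (simp add: not_less)
      have "(\<Sum>i\<in>?U. idx (p i)) = (\<Sum>i\<in>?U. idx i)"
        using p sum.permute[where p=p and S=UNIV and g=idx] by (simp add: comp_def)
      then have "\<forall>i. idx (p i) = idx i"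
        using le sum_mono_inv[where f=idx and g="\<lambda>i. idx (p i)" and I=UNIV] by (metis UNIV_I fU)
      then have "p = id" using inj by (auto simp: inj_def)
      with p show False by auto
    qed
    then obtain i where i: "idx (p i) < idx i" by blast
    from ld[OF i] have "\<exists>i \<in> ?U. A$i$p i = 0"
      by blast
    with prod_zero[OF fU]  show "?pp p = 0"
      by force
  qed
  from sum.mono_neutral_cong_left[OF finite_permutations[OF fU] id0 p0] show ?thesis
    unfolding det_def by (simp add: sign_id)
qed



lemma pdm_qf_nz: assumes "pdm X" "x \<noteq> 0" shows "qf X x x \<noteq> 0"
proof
  assume "qf X x x = 0"
  with assms show False unfolding pdm_def by auto
qed

lemma gs_nat:
  fixes X :: "complex^'m^'m" and g :: "nat \<Rightarrow> 'm"
  assumes X: "pdm X" and g: "bij_betw g {..<CARD('m)} UNIV"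
  shows "k \<le> CARD('m) \<Longrightarrow> \<exists>t::nat \<Rightarrow> complex^'m.
     (\<forall>a<k. t a $ g a = 1) \<and>
     (\<forall>a<k. \<forall>b<CARD('m). a < b \<longrightarrow> t a $ g b = 0) \<and>
     (\<forall>a<k. \<forall>a'<k. a \<noteq> a' \<longrightarrow> qf X (t a) (t a') = 0) \<and>
     (\<forall>a<k. \<exists>c. t a = axis (g a) 1 - (\<Sum>a'<a. c a' *s t a'))"
proof (induction k)
  case 0
  show ?case by auto
next
  case (Suc k)
  then obtain t where t1: "\<forall>a<k. t a $ g a = 1"
    and t2: "\<forall>a<k. \<forall>b<CARD('m). a < b \<longrightarrow> t a $ g b = 0"
    and t3: "\<forall>a<k. \<forall>a'<k. a \<noteq> a' \<longrightarrow> qf X (t a) (t a') = 0"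
    and t4: "\<forall>a<k. \<exists>c. t a = axis (g a) 1 - (\<Sum>a'<a. c a' *s t a')"
    by auto
  have kn: "k < CARD('m)" using Suc by auto
  have ginj: "\<And>a b. a < CARD('m) \<Longrightarrow> b < CARD('m) \<Longrightarrow> g a = g b \<Longrightarrow> a = b"
    using g unfolding bij_betw_def inj_on_def by auto
  have herm: "herm X" using X unfolding pdm_def by auto
  define e where "e = axis (g k) (1::complex)"
  define c where "c a = qf X (t a) e / qf X (t a) (t a)" for a
  define tk where "tk = e - (\<Sum>a<k. c a *s t a)"
  define t' where "t' = t(k := tk)"
  have nz: "qf X (t a) (t a) \<noteq> 0" if "a < k" for a
  proof -
    have "t a \<noteq> 0"
    proof
      assume "t a = 0"
      then have "t a $ g a = 0" by simp
      with t1 that show False by simp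
    qed
    then show ?thesis using pdm_qf_nz[OF X] by blast
  qed
  have orth1: "qf X (t a) tk = 0" if a: "a < k" for a
  proof -
    have "qf X (t a) tk = qf X (t a) e - (\<Sum>a'<k. c a' * qf X (t a) (t a'))"
      unfolding tk_def by (simp add: qf_diff_right qf_sum_right qf_scale_right)
    also have "(\<Sum>a'<k. c a' * qf X (t a) (t a')) = (\<Sum>a'<k. if a' = a then c a * qf X (t a) (t a) else 0)"
      using t3 a by (intro sum.cong refl) auto
    also have "\<dots> = c a * qf X (t a) (t a)" using a by simp
    also have "\<dots> = qf X (t a) e" unfolding c_def using nz[OF a] by simp
    finally show ?thesis by simp
  qed
  have orth2: "qf X tk (t a) = 0" if a: "a < k" for a
    using qf_herm[OF herm, of "t a" tk] orth1[OF a] by simp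
  have tkd: "tk $ g k = 1"
  proof -
    have "(\<Sum>a<k. c a *s t a) $ g k = (\<Sum>a<k. c a * (t a $ g k))" by simp
    also have "\<dots> = 0" using t2 kn by (intro sum.neutral) auto
    finally show ?thesis unfolding tk_def e_def by (simp add: axis_def)
  qed
  have tkz: "tk $ g b = 0" if "b < CARD('m)" "k < b" for b
  proof -
    have "(\<Sum>a<k. c a *s t a) $ g b = (\<Sum>a<k. c a * (t a $ g b))" by simp
    also have "\<dots> = 0" using t2 that by (intro sum.neutral) auto
    finally have "(\<Sum>a<k. c a *s t a) $ g b = 0" .
    moreover have "g b \<noteq> g k" using ginj[OF that(1) kn] that(2) by auto
    ultimately show ?thesis unfolding tk_def e_def by (simp add: axis_def)
  qed
  have tk4: "\<exists>c. tk = axis (g k) 1 - (\<Sum>a'<k. c a' *s t' a')"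
    by (rule exI[of _ c]) (simp add: tk_def e_def t'_def)
  show ?case
  proof (intro exI[of _ t'] conjI allI impI)
    fix a assume "a < Suc k" then show "t' a $ g a = 1"
      using t1 tkd by (cases "a = k") (auto simp: t'_def)
  next
    fix a b assume "a < Suc k" "b < CARD('m)" "a < b" then show "t' a $ g b = 0"
      using t2 tkz by (cases "a = k") (auto simp: t'_def)
  next
    fix a a' assume "a < Suc k" "a' < Suc k" "a \<noteq> a'" then show "qf X (t' a) (t' a') = 0"
      using t3 orth1 orth2 by (cases "a = k"; cases "a' = k") (auto simp: t'_def)
  next
    fix a assume a: "a < Suc k" show "\<exists>c. t' a = axis (g a) 1 - (\<Sum>a'<a. c a' *s t' a')"
    proof (cases "a = k")
      case True then show ?thesis using tk4 by (simp add: t'_def)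
    next
      case False
      then have "a < k" using a by auto
      then obtain c where "t a = axis (g a) 1 - (\<Sum>a'<a. c a' *s t a')" using t4 by blast
      moreover have "(\<Sum>a'<a. c a' *s t a') = (\<Sum>a'<a. c a' *s t' a')"
        using \<open>a < k\<close> by (intro sum.cong refl) (auto simp: t'_def)
      ultimately show ?thesis using False by (auto simp: t'_def)
    qed
  qed
qed



lemma pdm_qf_nonneg: "pdm X \<Longrightarrow> 0 \<le> Re (qf X x x)"
  unfolding pdm_def by (cases "x = 0") (auto intro: less_imp_le)

lemma gs_matrix:
  fixes X :: "complex^'m^'m"
  assumes X: "pdm X"
  shows "\<exists>T. det T = 1 \<and> (\<forall>a. T$a$a = 1) \<and>
    (\<forall>a b. a \<noteq> b \<longrightarrow> (mat_adj T ** X ** T)$a$b = 0) \<and>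
    (\<forall>a. Re ((mat_adj T ** X ** T)$a$a) \<le> Re (X$a$a)) \<and>
    (\<forall>a. Re (X$a$a) = Re ((mat_adj T ** X ** T)$a$a) \<longrightarrow> column a T = axis a 1)"
proof -
  let ?n = "CARD('m)"
  obtain g :: "nat \<Rightarrow> 'm" where g: "bij_betw g {..<?n} UNIV"
    using ex_bij_betw_nat_finite[of "UNIV :: 'm set"] by (auto simp: lessThan_atLeast0)
  obtain t :: "nat \<Rightarrow> complex^'m" where
    t1: "\<forall>a<?n. t a $ g a = 1" and
    t2: "\<forall>a<?n. \<forall>b<?n. a < b \<longrightarrow> t a $ g b = 0" and
    t3: "\<forall>a<?n. \<forall>a'<?n. a \<noteq> a' \<longrightarrow> qf X (t a) (t a') = 0" and
    t4: "\<forall>a<?n. \<exists>c. t a = axis (g a) 1 - (\<Sum>a'<a. c a' *s t a')"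
    using gs_nat[OF X g, of ?n] by auto
  have herm: "herm X" using X unfolding pdm_def by auto
  define idx where "idx = inv_into {..<?n} g"
  have gi: "g (idx a) = a" for a
    unfolding idx_def using g by (meson UNIV_I bij_betw_inv_into_right)
  have il: "idx a < ?n" for a
  proof -
    have "a \<in> g ` {..<?n}" using g by (simp add: bij_betw_def)
    then show ?thesis unfolding idx_def by (metis inv_into_into lessThan_iff)
  qed
  have inj: "inj idx" by (metis gi injI)
  have d1: "t (idx i) $ i = 1" for i using t1 il[of i] gi[of i] by metis
  define T where "T = (\<chi> i j. t (idx j) $ i)"
  have col: "column j T = t (idx j)" for j
    by (simp add: column_def T_def vec_eq_iff)
  have "det T = (\<Prod>i\<in>UNIV. T$i$i)"
  proof (rule det_triang[OF inj])
    fix i j assume "idx j < idx i"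
    then have "t (idx j) $ g (idx i) = 0" using t2 il[of i] il[of j] by blast
    then show "T $ i $ j = 0" using gi[of i] unfolding T_def by simp
  qed
  also have "\<dots> = 1" using d1 unfolding T_def by simp
  finally have detT: "det T = 1" .
  have diag1: "T$a$a = 1" for a using d1 unfolding T_def by simp
  have offd: "(mat_adj T ** X ** T)$a$b = 0" if "a \<noteq> b" for a b
  proof -
    have "idx a \<noteq> idx b" using that inj by (auto simp: inj_def)
    then show ?thesis unfolding congr_entry col using t3 il by auto
  qed
  have dg: "Re ((mat_adj T ** X ** T)$a$a) \<le> Re (X$a$a) \<and>
     (Re (X$a$a) = Re ((mat_adj T ** X ** T)$a$a) \<longrightarrow> column a T = axis a 1)" for a
  proof -
    define k where "k = idx a"
    have k: "k < ?n" using il k_def by simp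
    have gk: "g k = a" using gi k_def by simp
    obtain c where tk: "t k = axis a 1 - (\<Sum>a'<k. c a' *s t a')" using t4 k gk by auto
    define w where "w = (\<Sum>a'<k. c a' *s t a')"
    have e: "axis a 1 = t k + w" using tk w_def by simp
    have o1: "qf X (t k) w = 0"
      unfolding w_def qf_sum_right qf_scale_right using t3 k by (intro sum.neutral) auto
    have o2: "qf X w (t k) = 0" using qf_herm[OF herm, of w "t k"] o1 by simp
    have "X$a$a = qf X (axis a 1) (axis a 1)" by (simp add: qf_axis)
    also have "\<dots> = qf X (t k) (t k) + qf X w w"
      unfolding e qf_add_left qf_add_right o1 o2 by simp
    finally have Xaa: "X$a$a = (mat_adj T ** X ** T)$a$a + qf X w w"
      unfolding congr_entry col k_def by simp
    have nn: "0 \<le> Re (qf X w w)" using pdm_qf_nonneg[OF X] .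
    show ?thesis
    proof
      show "Re ((mat_adj T ** X ** T)$a$a) \<le> Re (X$a$a)" using Xaa nn by simp
      show "Re (X$a$a) = Re ((mat_adj T ** X ** T)$a$a) \<longrightarrow> column a T = axis a 1"
      proof
        assume "Re (X$a$a) = Re ((mat_adj T ** X ** T)$a$a)"
        then have "Re (qf X w w) = 0" using Xaa by simp
        then have "w = 0" using X unfolding pdm_def by (metis less_irrefl)
        then show "column a T = axis a 1" using e col k_def by simp
      qed
    qed
  qed
  show ?thesis
    apply (rule exI[of _ T])
    apply (intro conjI allI impI)
    using detT diag1 offd dg by auto
qed



lemma cip_adj: "cip x (mat_adj T *v z) = cip (T *v x) z"
proof -
  have "cip x (mat_adj T *v z) = (\<Sum>i\<in>UNIV. \<Sum>j\<in>UNIV. cnj (x$i) * (cnj (T$j$i) * z$j))"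
    unfolding cip_def mat_adj_def matrix_vector_mult_def by (simp add: sum_distrib_left)
  also have "\<dots> = (\<Sum>j\<in>UNIV. \<Sum>i\<in>UNIV. cnj (x$i) * (cnj (T$j$i) * z$j))"
    by (rule sum.swap)
  also have "\<dots> = cip (T *v x) z"
    unfolding cip_def matrix_vector_mult_def by (simp add: sum_distrib_left sum_distrib_right mult_ac)
  finally show ?thesis .
qed

lemma qf_congr: "qf (mat_adj T ** X ** T) x y = qf X (T *v x) (T *v y)"
  unfolding qf_def by (simp add: matrix_vector_mul_assoc[symmetric] cip_adj)

lemma inv_nz: assumes "T' ** T = mat 1" "x \<noteq> 0" shows "T *v x \<noteq> 0"
proof
  assume "T *v x = 0"
  then have "T' *v (T *v x) = 0" by simp
  then show False using assms by (simp add: matrix_vector_mul_assoc)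
qed

lemma herm_qf: "herm Y \<longleftrightarrow> (\<forall>x y. qf Y y x = cnj (qf Y x y))"
proof
  assume "herm Y" then show "\<forall>x y. qf Y y x = cnj (qf Y x y)" using qf_herm by blast
next
  assume "\<forall>x y. qf Y y x = cnj (qf Y x y)"
  then show "herm Y" unfolding herm_def by (metis qf_axis)
qed

lemma pdm_congr:
  fixes X T T' :: "complex^'n^'n"
  assumes X: "pdm X" and T: "T' ** T = mat 1"
  shows "pdm (mat_adj T ** X ** T)"
  unfolding pdm_def
proof (intro conjI allI impI)
  have "herm X" using X pdm_def by auto
  then show "herm (mat_adj T ** X ** T)" unfolding herm_qf qf_congr using qf_herm by blast
next
  fix x :: "complex^'n" assume "x \<noteq> 0"
  then have "T *v x \<noteq> 0" using inv_nz[OF T] by blast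
  then show "0 < Re (qf (mat_adj T ** X ** T) x x)" unfolding qf_congr using X pdm_def by blast
qed

lemma det_congr1: assumes "det T = 1" shows "det (mat_adj T ** X ** T) = det X"
proof -
  have "det (mat_adj T ** X ** T) = det (mat_adj T) * det X * det T"
    by (simp only: det_mul)
  also have "\<dots> = det X" using assms by (simp only: det_adj) simp
  finally show ?thesis .
qed

lemma det_pdm:
  fixes X :: "complex^'m^'m"
  assumes X: "pdm X"
  shows "\<exists>d. (\<forall>a. d a > 0) \<and> det X = complex_of_real (\<Prod>a\<in>UNIV. d a) \<and>
     (\<forall>a. d a \<le> Re (X$a$a)) \<and> ((\<forall>a. d a = Re (X$a$a)) \<longrightarrow> (\<forall>a b. a \<noteq> b \<longrightarrow> X$a$b = 0)) \<and>
     (\<forall>a. \<exists>v. v$a = 1 \<and> d a = Re (qf X v v))"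
proof -
  obtain T where detT: "det T = 1" and diag1: "\<forall>a. T$a$a = 1" and
    offd: "\<forall>a b. a \<noteq> b \<longrightarrow> (mat_adj T ** X ** T)$a$b = 0" and
    dle: "\<forall>a. Re ((mat_adj T ** X ** T)$a$a) \<le> Re (X$a$a)" and
    deq: "\<forall>a. Re (X$a$a) = Re ((mat_adj T ** X ** T)$a$a) \<longrightarrow> column a T = axis a 1"
    using gs_matrix[OF X] by (elim exE conjE) auto
  have herm: "herm X" using X pdm_def by auto
  define Y where "Y = mat_adj T ** X ** T"
  define d where "d a = Re (Y$a$a)" for a
  have Yaa: "Y$a$a = complex_of_real (d a)" for a
    unfolding d_def Y_def congr_entry using qf_herm_real[OF herm] by metis
  have dpos: "d a > 0" for a
  proof -
    have "column a T \<noteq> 0"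
    proof
      assume "column a T = 0"
      then have "column a T $ a = 0" by simp
      then show False using diag1 by (simp add: column_def)
    qed
    then show ?thesis unfolding d_def Y_def congr_entry using X pdm_def by blast
  qed
  have "det X = det Y" unfolding Y_def using det_congr1[OF detT] by simp
  also have "\<dots> = (\<Prod>a\<in>UNIV. Y$a$a)" using offd unfolding Y_def by (intro det_diagonal) auto
  also have "\<dots> = complex_of_real (\<Prod>a\<in>UNIV. d a)" unfolding Yaa by simp
  finally have detX: "det X = complex_of_real (\<Prod>a\<in>UNIV. d a)" .
  have eqc: "\<forall>a b. a \<noteq> b \<longrightarrow> X$a$b = 0" if all: "\<forall>a. d a = Re (X$a$a)"
  proof -
    have "column a T = axis a 1" for a using deq all unfolding d_def Y_def by metis
    then have "T = mat 1"
      unfolding vec_eq_iff column_def axis_def mat_def by (metis vec_lambda_beta)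
    moreover have "mat_adj (mat 1 :: complex^'m^'m) = mat 1"
      unfolding mat_adj_def mat_def vec_eq_iff by auto
    ultimately have "Y = X" unfolding Y_def by simp
    then show ?thesis using offd Y_def by metis
  qed
  have vv: "\<exists>v. v$a = 1 \<and> d a = Re (qf X v v)" for a
    by (rule exI[of _ "column a T"]) (simp add: d_def Y_def congr_entry column_def diag1)
  have dle': "\<forall>a. d a \<le> Re (X$a$a)" using dle unfolding d_def Y_def by blast
  show ?thesis
    apply (rule exI[of _ d])
    apply (intro conjI)
    subgoal using dpos by blast
    subgoal using detX .
    subgoal using dle' .
    subgoal using eqc by blast
    subgoal using vv by blast
    done
qed



lemma pdm_det_pos:
  fixes X :: "complex^'n^'n"
  assumes "pdm X" shows "0 < Re (det X)" "det X = complex_of_real (Re (det X))"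
proof -
  obtain d :: "'n \<Rightarrow> real" where d: "\<forall>a. d a > 0" "det X = complex_of_real (\<Prod>a\<in>UNIV. d a)"
    using det_pdm[OF assms] by (elim exE conjE) blast
  have re: "Re (det X) = (\<Prod>a\<in>UNIV. d a)" using d(2) by (simp only: Re_complex_of_real)
  then show "0 < Re (det X)" using d(1) by (simp add: prod_pos)
  show "det X = complex_of_real (Re (det X))" using d(2) re by (simp only:)
qed

lemma pdm_half_sum:
  assumes P: "pdm P" and Q: "pdm Q"
  shows "pdm ((1/2) *\<^sub>R (P + Q))"
  unfolding pdm_def
proof (intro conjI allI impI)
  have hP: "herm P" and hQ: "herm Q" using P Q pdm_def by auto
  show "herm ((1/2) *\<^sub>R (P + Q))"
    unfolding herm_qf qf_mat_scaleR qf_mat_add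
  proof (intro allI)
    fix x y
    show "complex_of_real (1/2) * (qf P y x + qf Q y x) = cnj (complex_of_real (1/2) * (qf P x y + qf Q x y))"
      by (simp add: qf_herm[OF hP, of x y] qf_herm[OF hQ, of x y])
  qed
next
  fix x :: "complex^'a" assume "x \<noteq> 0"
  then have "0 < Re (qf P x x)" "0 < Re (qf Q x x)" using P Q pdm_def by auto
  then show "0 < Re (qf ((1/2) *\<^sub>R (P + Q)) x x)"
    unfolding qf_mat_scaleR qf_mat_add by simp
qed

lemma amgm2: fixes p q :: real assumes "0 < p" "0 < q"
  shows "ln p + ln q \<le> 2 * ln ((p + q) / 2)" "ln p + ln q = 2 * ln ((p + q) / 2) \<Longrightarrow> p = q"
proof -
  have pq: "p * q \<le> ((p + q) / 2)^2"
    using sum_squares_ge_zero[of "p - q" 0] by (simp add: power2_eq_square field_simps)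
  have "ln p + ln q = ln (p * q)" using assms by (simp add: ln_mult)
  also have "\<dots> \<le> ln (((p + q) / 2)^2)" using pq assms by simp
  also have "\<dots> = 2 * ln ((p + q) / 2)" using assms by (simp add: ln_realpow)
  finally show "ln p + ln q \<le> 2 * ln ((p + q) / 2)" .
  assume "ln p + ln q = 2 * ln ((p + q) / 2)"
  then have "ln (p * q) = ln (((p + q) / 2)^2)" using assms by (simp add: ln_mult ln_realpow)
  then have "p * q = ((p + q) / 2)^2" using assms by simp
  then have "(p - q)^2 = 0" by (simp add: power2_eq_square field_simps)
  then show "p = q" by simp
qed

lemma logdet_concave:
  fixes P Q :: "complex^'m^'m"
  assumes P: "pdm P" and Q: "pdm Q"
  shows "ln (Re (det P)) + ln (Re (det Q)) \<le> 2 * ln (Re (det ((1/2) *\<^sub>R (P + Q)))) \<and>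
    (ln (Re (det P)) + ln (Re (det Q)) = 2 * ln (Re (det ((1/2) *\<^sub>R (P + Q)))) \<longrightarrow> P = Q)"
proof -
  define R where "R = (1/2) *\<^sub>R (P + Q)"
  have R: "pdm R" unfolding R_def using pdm_half_sum[OF P Q] .
  obtain T :: "complex^'m^'m" where detT: "det T = 1" and
    offd: "\<forall>a b. a \<noteq> b \<longrightarrow> (mat_adj T ** R ** T)$a$b = 0"
    using gs_matrix[OF R] by (elim exE conjE) blast
  have "invertible T" using detT by (simp add: invertible_det_nz)
  then obtain T' where TT': "T ** T' = mat 1" and T'T: "T' ** T = mat 1"
    unfolding invertible_def by blast
  define P' where "P' = mat_adj T ** P ** T"
  define Q' where "Q' = mat_adj T ** Q ** T"
  have P': "pdm P'" unfolding P'_def using pdm_congr[OF P T'T] .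
  have Q': "pdm Q'" unfolding Q'_def using pdm_congr[OF Q T'T] .
  have hP': "herm P'" and hQ': "herm Q'" using P' Q' pdm_def by auto
  define p where "p a = Re (P'$a$a)" for a
  define q where "q a = Re (Q'$a$a)" for a
  have P'aa: "P'$a$a = complex_of_real (p a)" for a
    unfolding p_def using qf_herm_real[OF hP', of "axis a 1"] qf_axis by metis
  have Q'aa: "Q'$a$a = complex_of_real (q a)" for a
    unfolding q_def using qf_herm_real[OF hQ', of "axis a 1"] qf_axis by metis
  have R'ab: "(mat_adj T ** R ** T)$a$b = (1/2) * (P'$a$b + Q'$a$b)" for a b
    unfolding R_def P'_def Q'_def congr_entry qf_mat_scaleR qf_mat_add by simp
  obtain dP :: "'m \<Rightarrow> real" where dP: "\<forall>a. dP a > 0" "det P' = complex_of_real (\<Prod>a\<in>UNIV. dP a)"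
    "\<forall>a. dP a \<le> p a" "(\<forall>a. dP a = p a) \<longrightarrow> (\<forall>a b. a \<noteq> b \<longrightarrow> P'$a$b = 0)"
    using det_pdm[OF P'] unfolding p_def by (elim exE conjE) blast
  obtain dQ :: "'m \<Rightarrow> real" where dQ: "\<forall>a. dQ a > 0" "det Q' = complex_of_real (\<Prod>a\<in>UNIV. dQ a)"
    "\<forall>a. dQ a \<le> q a" "(\<forall>a. dQ a = q a) \<longrightarrow> (\<forall>a b. a \<noteq> b \<longrightarrow> Q'$a$b = 0)"
    using det_pdm[OF Q'] unfolding q_def by (elim exE conjE) blast
  have pp: "p a > 0" for a using dP(1) dP(3) by (meson less_le_trans)
  have qp: "q a > 0" for a using dQ(1) dQ(3) by (meson less_le_trans)
  have "det P = det P'" unfolding P'_def using det_congr1[OF detT] by simp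
  then have "Re (det P) = (\<Prod>a\<in>UNIV. dP a)" using dP(2) by (simp only: Re_complex_of_real)
  moreover have "dP a \<noteq> 0" for a using dP(1) by (metis less_irrefl)
  ultimately have lP: "ln (Re (det P)) = (\<Sum>a\<in>UNIV. ln (dP a))"
    by (simp add: ln_prod)
  have "det Q = det Q'" unfolding Q'_def using det_congr1[OF detT] by simp
  then have "Re (det Q) = (\<Prod>a\<in>UNIV. dQ a)" using dQ(2) by (simp only: Re_complex_of_real)
  moreover have "dQ a \<noteq> 0" for a using dQ(1) by (metis less_irrefl)
  ultimately have lQ: "ln (Re (det Q)) = (\<Sum>a\<in>UNIV. ln (dQ a))"
    by (simp add: ln_prod)
  have "det R = det (mat_adj T ** R ** T)" using det_congr1[OF detT] by simp
  also have "\<dots> = (\<Prod>a\<in>UNIV. (mat_adj T ** R ** T)$a$a)"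
    using offd by (intro det_diagonal) auto
  also have "\<dots> = complex_of_real (\<Prod>a\<in>UNIV. (p a + q a) / 2)"
    unfolding R'ab P'aa Q'aa by simp
  finally have "Re (det R) = (\<Prod>a\<in>UNIV. (p a + q a) / 2)" by (simp only: Re_complex_of_real)
  moreover have "(p a + q a) / 2 \<noteq> 0" for a using pp[of a] qp[of a] by simp
  ultimately have lR: "2 * ln (Re (det R)) = (\<Sum>a\<in>UNIV. 2 * ln ((p a + q a) / 2))"
    by (simp add: ln_prod sum_distrib_left)
  define u where "u a = (ln (p a) - ln (dP a)) + (ln (q a) - ln (dQ a)) +
      (2 * ln ((p a + q a) / 2) - ln (p a) - ln (q a))" for a
  have u1: "ln (p a) - ln (dP a) \<ge> 0" for a
    using ln_le_cancel_iff[of "dP a" "p a"] dP(1,3) pp[of a] by simp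
  have u2: "ln (q a) - ln (dQ a) \<ge> 0" for a
    using ln_le_cancel_iff[of "dQ a" "q a"] dQ(1,3) qp[of a] by simp
  have u3: "2 * ln ((p a + q a) / 2) - ln (p a) - ln (q a) \<ge> 0" for a
    using amgm2(1)[OF pp[of a] qp[of a]] by simp
  have u0: "u a \<ge> 0" for a unfolding u_def using u1[of a] u2[of a] u3[of a] by linarith
  have sumu: "2 * ln (Re (det R)) - (ln (Re (det P)) + ln (Re (det Q))) = (\<Sum>a\<in>UNIV. u a)"
    unfolding lR lP lQ u_def by (simp add: sum_subtractf sum.distrib algebra_simps)
  have ineq: "ln (Re (det P)) + ln (Re (det Q)) \<le> 2 * ln (Re (det R))"
    using sumu u0 sum_nonneg[of UNIV u] by simp
  have eqcase: "P = Q" if eq: "ln (Re (det P)) + ln (Re (det Q)) = 2 * ln (Re (det R))"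
  proof -
    have "(\<Sum>a\<in>UNIV. u a) = 0" using sumu eq by simp
    then have uz: "u a = 0" for a using sum_nonneg_eq_0_iff[of UNIV u] u0 by simp
    have e1: "ln (p a) = ln (dP a)" for a using uz[of a] u1[of a] u2[of a] u3[of a] unfolding u_def by simp
    have e2: "ln (q a) = ln (dQ a)" for a using uz[of a] u1[of a] u2[of a] u3[of a] unfolding u_def by simp
    have e3: "ln (p a) + ln (q a) = 2 * ln ((p a + q a) / 2)" for a
      using uz[of a] u1[of a] u2[of a] u3[of a] unfolding u_def by simp
    have "dP a = p a" for a using e1[of a] dP(1) pp[of a] by simp
    then have offP: "\<forall>a b. a \<noteq> b \<longrightarrow> P'$a$b = 0" using dP(4) by blast
    have "dQ a = q a" for a using e2[of a] dQ(1) qp[of a] by simp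
    then have offQ: "\<forall>a b. a \<noteq> b \<longrightarrow> Q'$a$b = 0" using dQ(4) by blast
    have "p a = q a" for a using amgm2(2)[OF pp[of a] qp[of a] e3[of a]] .
    then have PQ': "P' = Q'" unfolding vec_eq_iff using offP offQ P'aa Q'aa by metis
    have "P$i$j = Q$i$j" for i j
    proof -
      have ai: "axis i 1 = T *v (T' *v axis i 1)" by (simp add: matrix_vector_mul_assoc TT')
      have aj: "axis j 1 = T *v (T' *v axis j 1)" by (simp add: matrix_vector_mul_assoc TT')
      have "P$i$j = qf P (T *v (T' *v axis i 1)) (T *v (T' *v axis j 1))"
        using ai aj qf_axis by metis
      also have "\<dots> = qf P' (T' *v axis i 1) (T' *v axis j 1)" unfolding P'_def qf_congr ..
      also have "\<dots> = qf Q' (T' *v axis i 1) (T' *v axis j 1)" using PQ' by simp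
      also have "\<dots> = qf Q (T *v (T' *v axis i 1)) (T *v (T' *v axis j 1))" unfolding Q'_def qf_congr ..
      also have "\<dots> = Q$i$j" using ai aj qf_axis by metis
      finally show ?thesis .
    qed
    then show "P = Q" by (simp add: vec_eq_iff)
  qed
  show ?thesis using ineq eqcase unfolding R_def by blast
qed



lemma cip_self: "cip x x = complex_of_real (\<Sum>i\<in>UNIV. (cmod (x$i))^2)"
proof -
  have "cnj (x$i) * x$i = complex_of_real ((cmod (x$i))^2)" for i
    by (metis complex_norm_square mult.commute of_real_power)
  then show ?thesis unfolding cip_def by (simp only: of_real_sum)
qed

lemma cip_self_pos: "x \<noteq> 0 \<Longrightarrow> 0 < Re (cip x x)"
proof -
  assume "x \<noteq> 0"
  then obtain i where i: "x$i \<noteq> 0" by (metis vec_eq_iff zero_index)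
  have "0 < (cmod (x$i))^2" using i by simp
  also have "\<dots> \<le> (\<Sum>i\<in>UNIV. (cmod (x$i))^2)"
    by (rule member_le_sum) auto
  finally show ?thesis unfolding cip_self by simp
qed

lemma qf_id: "qf (mat 1) x y = cip x y"
  unfolding qf_def by simp

lemma herm_id: "herm (mat 1 :: complex^'n^'n)"
  unfolding herm_def mat_def by auto

lemma pdm_I_plus:
  fixes A :: "complex^'n^'n"
  assumes A: "cpsd A" shows "pdm (mat 1 + A)"
  unfolding pdm_def
proof (intro conjI allI impI)
  have hA: "herm A" using A cpsd_iff by auto
  show "herm (mat 1 + A)"
    unfolding herm_def
  proof (intro allI)
    fix i j
    have "A$j$i = cnj (A$i$j)" using hA unfolding herm_def by blast
    then show "(mat 1 + A) $ j $ i = cnj ((mat 1 + A) $ i $ j)" by (simp add: mat_def)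
  qed
next
  fix x :: "complex^'n" assume "x \<noteq> 0"
  then have "0 < Re (cip x x)" by (rule cip_self_pos)
  moreover have "0 \<le> Re (qf A x x)" using A cpsd_iff by auto
  ultimately show "0 < Re (qf (mat 1 + A) x x)" unfolding qf_mat_add qf_id by simp
qed

lemma det_I_plus:
  fixes A :: "complex^'n^'n"
  assumes A: "cpsd A"
  shows "1 \<le> Re (det (mat 1 + A))" "ln (Re (det (mat 1 + A))) \<le> (\<Sum>a\<in>UNIV. Re (A$a$a))"
proof -
  have X: "pdm (mat 1 + A)" using pdm_I_plus[OF A] .
  obtain d :: "'n \<Rightarrow> real" where d1: "\<forall>a. d a > 0" and d2: "det (mat 1 + A) = complex_of_real (\<Prod>a\<in>UNIV. d a)"
     and d3: "\<forall>a. d a \<le> Re ((mat 1 + A)$a$a)" and d5: "\<forall>a. \<exists>v. v$a = 1 \<and> d a = Re (qf (mat 1 + A) v v)"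
    using det_pdm[OF X] by (elim exE conjE) blast
  have ge1: "d a \<ge> 1" for a
  proof -
    obtain v where v: "v$a = 1" "d a = Re (qf (mat 1 + A) v v)" using d5 by blast
    have "1 = (cmod (v$a))^2" using v by simp
    also have "\<dots> \<le> (\<Sum>i\<in>UNIV. (cmod (v$i))^2)" by (rule member_le_sum) auto
    also have "\<dots> = Re (cip v v)" unfolding cip_self by simp
    also have "\<dots> \<le> d a" unfolding v qf_mat_add qf_id using A cpsd_iff by auto
    finally show ?thesis .
  qed
  have re: "Re (det (mat 1 + A)) = (\<Prod>a\<in>UNIV. d a)" using d2 by (simp only: Re_complex_of_real)
  show "1 \<le> Re (det (mat 1 + A))" unfolding re using ge1 by (simp add: prod_ge_1)
  have "d a \<noteq> 0" for a using d1 by (metis less_irrefl)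
  then have "ln (Re (det (mat 1 + A))) = (\<Sum>a\<in>UNIV. ln (d a))" unfolding re by (simp add: ln_prod)
  also have "\<dots> \<le> (\<Sum>a\<in>UNIV. Re (A$a$a))"
  proof (rule sum_mono)
    fix a
    have "ln (d a) \<le> d a - 1" using d1 ln_le_minus_one by blast
    also have "\<dots> \<le> Re (A$a$a)" using d3[rule_format, of a] by (simp add: mat_def)
    finally show "ln (d a) \<le> Re (A$a$a)" .
  qed
  finally show "ln (Re (det (mat 1 + A))) \<le> (\<Sum>a\<in>UNIV. Re (A$a$a))" .
qed

lemma adj_adj: "mat_adj (mat_adj H) = H"
  unfolding mat_adj_def by (simp add: vec_eq_iff)

lemma cpsd_HQH:
  fixes H :: "complex^'n^'m" and Q :: "complex^'n^'n"
  assumes Q: "cpsd Q" and s: "s > 0"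
  shows "cpsd ((1/s) *\<^sub>R (H ** Q ** mat_adj H))"
proof -
  have hQ: "herm Q" and nQ: "\<And>x. 0 \<le> Re (qf Q x x)" using Q cpsd_iff by auto
  have e: "H ** Q ** mat_adj H = mat_adj (mat_adj H) ** Q ** mat_adj H" by (simp add: adj_adj)
  have qfe: "qf ((1/s) *\<^sub>R (H ** Q ** mat_adj H)) x y = complex_of_real (1/s) * qf Q (mat_adj H *v x) (mat_adj H *v y)" for x y
    unfolding qf_mat_scaleR e qf_congr ..
  show ?thesis unfolding cpsd_iff herm_qf qfe
  proof (intro conjI allI)
    fix x y show "complex_of_real (1/s) * qf Q (mat_adj H *v y) (mat_adj H *v x) =
       cnj (complex_of_real (1/s) * qf Q (mat_adj H *v x) (mat_adj H *v y))"
      by (simp add: qf_herm[OF hQ, of "mat_adj H *v x" "mat_adj H *v y"])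
  next
    fix x show "0 \<le> Re (complex_of_real (1/s) * qf Q (mat_adj H *v x) (mat_adj H *v x))"
      using nQ s by simp
  qed
qed



lemma moment2_from_char:
  fixes \<mu> :: "'a measure" and X :: "'a \<Rightarrow> real" and v :: real
  assumes P: "prob_space \<mu>" and Xm: "X \<in> borel_measurable \<mu>" and v: "v \<ge> 0"
    and ch: "\<And>t. integral\<^sup>L \<mu> (\<lambda>x. iexp (t * X x)) = complex_of_real (exp (- (t^2) * v))"
  shows "integrable \<mu> (\<lambda>x. (X x)^2)"
proof -
  interpret prob_space \<mu> by (rule P)
  interpret N: real_distribution std_normal_distribution by (rule real_dist_normal_dist)
  define \<sigma> where "\<sigma> = sqrt (2 * v)"
  have s2: "\<sigma>^2 = 2 * v" unfolding \<sigma>_def using v by simp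
  define N' where "N' = distr std_normal_distribution borel (\<lambda>x. \<sigma> * x)"
  have mN: "(\<lambda>x. \<sigma> * x) \<in> borel_measurable std_normal_distribution" by simp
  have rN': "real_distribution N'" unfolding N'_def
    by (rule N.real_distribution_distr) (simp add: mN)
  have rX: "real_distribution (distr \<mu> borel X)"
    by (rule real_distribution_distr) (simp add: Xm)
  have cN': "char N' t = complex_of_real (exp (- (t^2) * v))" for t
  proof -
    have "char N' t = integral\<^sup>L std_normal_distribution (\<lambda>x. iexp (t * (\<sigma> * x)))"
      unfolding char_def N'_def by (subst integral_distr) (auto simp: mN)
    also have "\<dots> = char std_normal_distribution (t * \<sigma>)"
      unfolding char_def by (simp add: mult.assoc mult.commute mult.left_commute)
    also have "\<dots> = complex_of_real (exp (- ((t * \<sigma>)^2) / 2))"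
      by (simp add: char_std_normal_distribution)
    also have "(t * \<sigma>)^2 = t^2 * (2 * v)" by (simp add: power_mult_distrib s2)
    finally show ?thesis by simp
  qed
  have cX: "char (distr \<mu> borel X) t = complex_of_real (exp (- (t^2) * v))" for t
  proof -
    have "char (distr \<mu> borel X) t = integral\<^sup>L \<mu> (\<lambda>x. iexp (t * X x))"
      unfolding char_def by (subst integral_distr) (auto simp: Xm)
    then show ?thesis using ch by simp
  qed
  have eq: "distr \<mu> borel X = N'"
    by (rule Levy_uniqueness[OF rX rN']) (simp add: fun_eq_iff cX cN')
  have "integrable std_normal_distribution (\<lambda>x. \<sigma>^2 * x^2)"
    using integrable_std_normal_distribution_moment[of 2] by simp
  then have "integrable std_normal_distribution (\<lambda>x. (\<sigma> * x)^2)"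
    by (simp add: power_mult_distrib)
  then have "integrable N' (\<lambda>x. x^2)"
    unfolding N'_def by (subst integrable_distr_eq) (auto simp: mN)
  then have "integrable (distr \<mu> borel X) (\<lambda>x. x^2)" using eq by simp
  then show ?thesis by (subst (asm) integrable_distr_eq) (auto simp: Xm)
qed



definition unitm :: "'m \<Rightarrow> 'n \<Rightarrow> complex \<Rightarrow> complex^'n^'m" where
  "unitm i j c = (\<chi> k l. if k = i \<and> l = j then c else 0)"

lemma unitm_pair: "(unitm i j c :: complex^'n^'m) $ fst k $ snd k = (if k = (i, j) then c else 0)"
  unfolding unitm_def by (cases k) auto

lemma unitm_sum1: "(\<Sum>k\<in>UNIV. \<Sum>l\<in>UNIV. cnj ((unitm i j c :: complex^'n^'m) $ k $ l) * H $ k $ l) = cnj c * H $ i $ j"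
proof -
  have "(\<Sum>k\<in>UNIV. \<Sum>l\<in>UNIV. cnj ((unitm i j c :: complex^'n^'m) $ k $ l) * H $ k $ l)
      = (\<Sum>k\<in>UNIV. \<Sum>l\<in>UNIV. if l = j then (if k = i then cnj c * H $ k $ l else 0) else 0)"
    unfolding unitm_def by (intro sum.cong refl) auto
  also have "\<dots> = cnj c * H $ i $ j" by simp
  finally show ?thesis .
qed

lemma unitm_sum2:
  "(\<Sum>k\<in>UNIV. \<Sum>l\<in>UNIV. cnj ((unitm i j c :: complex^'n^'m) $ fst k $ snd k) * S k l * (unitm i j c :: complex^'n^'m) $ fst l $ snd l)
     = cnj c * S (i, j) (i, j) * c"
proof -
  have "(\<Sum>k\<in>UNIV. \<Sum>l\<in>UNIV. cnj ((unitm i j c :: complex^'n^'m) $ fst k $ snd k) * S k l * (unitm i j c :: complex^'n^'m) $ fst l $ snd l)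
      = (\<Sum>k\<in>UNIV. \<Sum>l\<in>UNIV. if l = (i, j) then (if k = (i, j) then cnj c * S k l * c else 0) else 0)"
    unfolding unitm_pair by (intro sum.cong refl) auto
  also have "\<dots> = cnj c * S (i, j) (i, j) * c" by simp
  finally show ?thesis .
qed

lemma cscg_moments:
  fixes \<mu> :: "(complex^'n^'m) measure" and S :: "'m \<times> 'n \<Rightarrow> 'm \<times> 'n \<Rightarrow> complex"
  assumes cov: "cov_psd S" and law: "cscg_law \<mu> S"
  shows "integrable \<mu> (\<lambda>H. (Re (H$i$j))^2)" "integrable \<mu> (\<lambda>H. (Im (H$i$j))^2)"
proof -
  have P: "prob_space \<mu>" and sets: "sets \<mu> = sets borel" using law cscg_law_def by auto
  define s where "s = S (i, j) (i, j)"
  have sreal: "s = complex_of_real (Re s)"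
  proof -
    have "s = cnj s" using cov unfolding cov_psd_def s_def by metis
    then show ?thesis by (metis Reals_cnj_iff complex_is_Real_iff of_real_Re)
  qed
  have snn: "0 \<le> Re s"
  proof -
    define a where "a k = (if k = (i, j) then (1::complex) else 0)" for k
    have "0 \<le> Re (\<Sum>k\<in>UNIV. \<Sum>l\<in>UNIV. cnj (a k) * S k l * a l)" using cov cov_psd_def by blast
    also have "(\<Sum>k\<in>UNIV. \<Sum>l\<in>UNIV. cnj (a k) * S k l * a l) =
        (\<Sum>k\<in>UNIV. \<Sum>l\<in>UNIV. if l = (i, j) then (if k = (i, j) then S k l else 0) else 0)"
      unfolding a_def by (intro sum.cong refl) auto
    also have "\<dots> = s" unfolding s_def by simp
    finally show ?thesis .
  qed
  have mb: "measurable \<mu> borel = measurable borel borel" by (rule measurable_cong_sets) (auto simp: sets)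
  have vn: "(\<lambda>H::complex^'n^'m. H $ i $ j) \<in> borel_measurable borel"
    by (intro borel_measurable_continuous_onI continuous_intros)
  have mRe: "(\<lambda>H::complex^'n^'m. Re (H$i$j)) \<in> borel_measurable \<mu>" unfolding mb
    using vn by measurable
  have mIm: "(\<lambda>H::complex^'n^'m. Im (H$i$j)) \<in> borel_measurable \<mu>" unfolding mb
    using vn by measurable
  have cf: "integral\<^sup>L \<mu> (\<lambda>H. exp (\<i> * complex_of_real (Re (cnj c * H $ i $ j))))
      = exp (- (cnj c * s * c) / 4)" for c
  proof -
    have L: "\<forall>a::complex^'n^'m.
        integral\<^sup>L \<mu> (\<lambda>H. exp (\<i> * complex_of_real
            (Re (\<Sum>i\<in>UNIV. \<Sum>j\<in>UNIV. cnj (a $ i $ j) * H $ i $ j))))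
        = exp (- (\<Sum>k\<in>UNIV. \<Sum>l\<in>UNIV. cnj (a $ fst k $ snd k) * S k l * a $ fst l $ snd l) / 4)"
      using law unfolding cscg_law_def by (elim conjE)
    show ?thesis using L[rule_format, of "unitm i j c"] unfolding unitm_sum1 unitm_sum2 s_def .
  qed
  show "integrable \<mu> (\<lambda>H. (Re (H$i$j))^2)"
  proof (rule moment2_from_char[OF P mRe, of "Re s / 4"])
    show "0 \<le> Re s / 4" using snn by simp
    fix t :: real
    have "integral\<^sup>L \<mu> (\<lambda>H. iexp (t * Re (H $ i $ j))) =
        integral\<^sup>L \<mu> (\<lambda>H. exp (\<i> * complex_of_real (Re (cnj (complex_of_real t) * H $ i $ j))))"
      by simp
    also have "\<dots> = exp (- (cnj (complex_of_real t) * s * complex_of_real t) / 4)" by (rule cf)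
    also have "\<dots> = complex_of_real (exp (- t\<^sup>2 * (Re s / 4)))"
      by (subst sreal) (simp add: power2_eq_square exp_of_real[symmetric] mult_ac)
    finally show "integral\<^sup>L \<mu> (\<lambda>H. iexp (t * Re (H $ i $ j))) = complex_of_real (exp (- t\<^sup>2 * (Re s / 4)))" .
  qed
  show "integrable \<mu> (\<lambda>H. (Im (H$i$j))^2)"
  proof (rule moment2_from_char[OF P mIm, of "Re s / 4"])
    show "0 \<le> Re s / 4" using snn by simp
    fix t :: real
    have "integral\<^sup>L \<mu> (\<lambda>H. iexp (t * Im (H $ i $ j))) =
        integral\<^sup>L \<mu> (\<lambda>H. exp (\<i> * complex_of_real (Re (cnj (\<i> * complex_of_real t) * H $ i $ j))))"
      by simp
    also have "\<dots> = exp (- (cnj (\<i> * complex_of_real t) * s * (\<i> * complex_of_real t)) / 4)" by (rule cf)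
    also have "\<dots> = complex_of_real (exp (- t\<^sup>2 * (Re s / 4)))"
      by (subst sreal) (simp add: power2_eq_square exp_of_real[symmetric] mult_ac)
    finally show "integral\<^sup>L \<mu> (\<lambda>H. iexp (t * Im (H $ i $ j))) = complex_of_real (exp (- t\<^sup>2 * (Re s / 4)))" .
  qed
qed



lemma scaleR_entry: "((c::real) *\<^sub>R (Y::complex^'n^'m)) $ a $ b = complex_of_real c * Y $ a $ b"
  unfolding vector_scaleR_component by (simp add: scaleR_conv_of_real)

lemma HXH_entry: "(H ** X ** mat_adj H) $ a $ b = (\<Sum>l\<in>UNIV. \<Sum>k\<in>UNIV. H$a$k * X$k$l * cnj (H$b$l))"
  unfolding matrix_matrix_mult_def mat_adj_def by (simp add: sum_distrib_right)

lemma Mentry: "(mat 1 + c *\<^sub>R (H ** X ** mat_adj H)) $ a $ b =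
   (if a = b then 1 else 0) + complex_of_real c * (\<Sum>l\<in>UNIV. \<Sum>k\<in>UNIV. H$a$k * X$k$l * cnj (H$b$l))"
  unfolding vector_add_component scaleR_entry HXH_entry by (simp add: mat_def)

lemma meas_f:
  fixes X :: "complex^'n^'n" and \<mu> :: "(complex^'n^'m) measure"
  assumes sets: "sets \<mu> = sets borel"
  shows "(\<lambda>H. ln (Re (det (mat 1 + c *\<^sub>R (H ** X ** mat_adj H))))) \<in> borel_measurable \<mu>"
proof -
  have mb: "measurable \<mu> borel = measurable borel borel" by (rule measurable_cong_sets) (auto simp: sets)
  have vn[measurable]: "(\<lambda>H::complex^'n^'m. H $ i $ j) \<in> borel_measurable borel" for i j
    by (intro borel_measurable_continuous_onI continuous_intros)
  have vnc[measurable]: "(\<lambda>H::complex^'n^'m. cnj (H $ i $ j)) \<in> borel_measurable borel" for i j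
    by (intro borel_measurable_continuous_onI continuous_intros)
  have "(\<lambda>H::complex^'n^'m. det (mat 1 + c *\<^sub>R (H ** X ** mat_adj H))) \<in> borel_measurable borel"
    unfolding det_def Mentry by measurable
  then show ?thesis unfolding mb by measurable
qed

definition NH :: "complex^'n^'m \<Rightarrow> real" where
  "NH H = (\<Sum>i\<in>UNIV. \<Sum>j\<in>UNIV. (Re (H$i$j))^2 + (Im (H$i$j))^2)"

lemma NH_entry: "(cmod (H$i$j))^2 \<le> NH H"
proof -
  have "(cmod (H$i$j))^2 = (Re (H$i$j))^2 + (Im (H$i$j))^2" by (simp add: cmod_power2)
  also have "\<dots> \<le> (\<Sum>j\<in>UNIV. (Re (H$i$j))^2 + (Im (H$i$j))^2)"
    by (rule member_le_sum[where f="\<lambda>j. (Re (H$i$j))^2 + (Im (H$i$j))^2"]) auto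
  also have "\<dots> \<le> NH H" unfolding NH_def
    by (rule member_le_sum[where f="\<lambda>i. \<Sum>j\<in>UNIV. (Re (H$i$j))^2 + (Im (H$i$j))^2"])
       (auto intro: sum_nonneg)
  finally show ?thesis .
qed

lemma NH_prod: "cmod (H$a$k) * cmod (H$a$l) \<le> NH H"
proof -
  have "cmod (H$a$k) * cmod (H$a$l) \<le> ((cmod (H$a$k))^2 + (cmod (H$a$l))^2) / 2"
    using sum_squares_ge_zero[of "cmod (H$a$k) - cmod (H$a$l)" 0]
    by (simp add: power2_eq_square algebra_simps)
  also have "\<dots> \<le> NH H" using NH_entry[of H a k] NH_entry[of H a l] by simp
  finally show ?thesis .
qed

lemma f_bound:
  fixes H :: "complex^'n^'m" and Q :: "complex^'n^'n"
  assumes Q: "cpsd Q" and s: "s > 0"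
  shows "0 \<le> ln (Re (det (mat 1 + (1/s) *\<^sub>R (H ** Q ** mat_adj H))))"
    "ln (Re (det (mat 1 + (1/s) *\<^sub>R (H ** Q ** mat_adj H)))) \<le>
       (real CARD('m) * ((\<Sum>l\<in>UNIV. \<Sum>k\<in>UNIV. cmod (Q$k$l)) / s)) * NH H"
proof -
  define A where "A = (1/s) *\<^sub>R (H ** Q ** mat_adj H)"
  have A: "cpsd A" unfolding A_def using cpsd_HQH[OF Q s] .
  show "0 \<le> ln (Re (det (mat 1 + (1/s) *\<^sub>R (H ** Q ** mat_adj H))))"
    using det_I_plus(1)[OF A] unfolding A_def by simp
  have ent: "Re (A$a$a) \<le> ((\<Sum>l\<in>UNIV. \<Sum>k\<in>UNIV. cmod (Q$k$l)) / s) * NH H" for a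
  proof -
    have "Re (A$a$a) = (1/s) * Re (\<Sum>l\<in>UNIV. \<Sum>k\<in>UNIV. H$a$k * Q$k$l * cnj (H$a$l))"
      unfolding A_def scaleR_entry HXH_entry by simp
    also have "Re (\<Sum>l\<in>UNIV. \<Sum>k\<in>UNIV. H$a$k * Q$k$l * cnj (H$a$l)) \<le>
        cmod (\<Sum>l\<in>UNIV. \<Sum>k\<in>UNIV. H$a$k * Q$k$l * cnj (H$a$l))"
      by (rule complex_Re_le_cmod)
    also have "\<dots> \<le> (\<Sum>l\<in>UNIV. cmod (\<Sum>k\<in>UNIV. H$a$k * Q$k$l * cnj (H$a$l)))"
      by (rule norm_sum)
    also have "\<dots> \<le> (\<Sum>l\<in>UNIV. \<Sum>k\<in>UNIV. cmod (H$a$k * Q$k$l * cnj (H$a$l)))"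
      by (intro sum_mono norm_sum)
    also have "\<dots> \<le> (\<Sum>l\<in>UNIV. \<Sum>k\<in>UNIV. cmod (Q$k$l) * NH H)"
    proof (intro sum_mono)
      fix l k
      have "cmod (H$a$k * Q$k$l * cnj (H$a$l)) = cmod (Q$k$l) * (cmod (H$a$k) * cmod (H$a$l))"
        by (simp add: norm_mult)
      also have "\<dots> \<le> cmod (Q$k$l) * NH H" by (intro mult_left_mono NH_prod) auto
      finally show "cmod (H$a$k * Q$k$l * cnj (H$a$l)) \<le> cmod (Q$k$l) * NH H" .
    qed
    also have "\<dots> = (\<Sum>l\<in>UNIV. \<Sum>k\<in>UNIV. cmod (Q$k$l)) * NH H"
      by (simp add: sum_distrib_right)
    finally have "Re (A$a$a) \<le> (1/s) * ((\<Sum>l\<in>UNIV. \<Sum>k\<in>UNIV. cmod (Q$k$l)) * NH H)"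
      using s by (simp add: divide_right_mono)
    then show ?thesis by simp
  qed
  have "ln (Re (det (mat 1 + A))) \<le> (\<Sum>a\<in>UNIV. Re (A$a$a))" by (rule det_I_plus(2)[OF A])
  also have "\<dots> \<le> (\<Sum>a\<in>(UNIV::'m set). ((\<Sum>l\<in>UNIV. \<Sum>k\<in>UNIV. cmod (Q$k$l)) / s) * NH H)"
    by (rule sum_mono) (rule ent)
  also have "\<dots> = (real CARD('m) * ((\<Sum>l\<in>UNIV. \<Sum>k\<in>UNIV. cmod (Q$k$l)) / s)) * NH H"
    by simp
  finally show "ln (Re (det (mat 1 + (1/s) *\<^sub>R (H ** Q ** mat_adj H)))) \<le>
       (real CARD('m) * ((\<Sum>l\<in>UNIV. \<Sum>k\<in>UNIV. cmod (Q$k$l)) / s)) * NH H"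
    unfolding A_def .
qed



lemma M_half:
  fixes H :: "complex^'n^'m" and Q1 Q2 :: "complex^'n^'n"
  shows "mat 1 + c *\<^sub>R (H ** ((1/2) *\<^sub>R (Q1 + Q2)) ** mat_adj H) =
    (1/2) *\<^sub>R ((mat 1 + c *\<^sub>R (H ** Q1 ** mat_adj H)) + (mat 1 + c *\<^sub>R (H ** Q2 ** mat_adj H)))"
proof -
  have e3: "(\<Sum>l\<in>UNIV. \<Sum>k\<in>UNIV. H$a$k * ((1/2) *\<^sub>R (Q1 + Q2))$k$l * cnj (H$b$l)) =
     complex_of_real (1/2) * ((\<Sum>l\<in>UNIV. \<Sum>k\<in>UNIV. H$a$k * Q1$k$l * cnj (H$b$l)) +
                              (\<Sum>l\<in>UNIV. \<Sum>k\<in>UNIV. H$a$k * Q2$k$l * cnj (H$b$l)))" for a b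
    unfolding scaleR_entry vector_add_component
    by (simp add: sum.distrib sum_distrib_left algebra_simps)
  show ?thesis
    unfolding vec_eq_iff
  proof (intro allI)
    fix a b
    show "(mat 1 + c *\<^sub>R (H ** ((1/2) *\<^sub>R (Q1 + Q2)) ** mat_adj H)) $ a $ b =
      ((1/2) *\<^sub>R ((mat 1 + c *\<^sub>R (H ** Q1 ** mat_adj H)) + (mat 1 + c *\<^sub>R (H ** Q2 ** mat_adj H)))) $ a $ b"
    proof -
      let ?S1 = "(\<Sum>l\<in>UNIV. \<Sum>k\<in>UNIV. H$a$k * Q1$k$l * cnj (H$b$l))"
      let ?S2 = "(\<Sum>l\<in>UNIV. \<Sum>k\<in>UNIV. H$a$k * Q2$k$l * cnj (H$b$l))"
      let ?d = "(if a = b then 1 else 0) :: complex"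
      have l: "(mat 1 + c *\<^sub>R (H ** ((1/2) *\<^sub>R (Q1 + Q2)) ** mat_adj H)) $ a $ b =
          ?d + complex_of_real c * (complex_of_real (1/2) * (?S1 + ?S2))"
        by (simp only: Mentry e3)
      have r: "((1/2) *\<^sub>R ((mat 1 + c *\<^sub>R (H ** Q1 ** mat_adj H)) + (mat 1 + c *\<^sub>R (H ** Q2 ** mat_adj H)))) $ a $ b
          = complex_of_real (1/2) * ((?d + complex_of_real c * ?S1) + (?d + complex_of_real c * ?S2))"
        by (simp only: scaleR_entry vector_add_component Mentry[symmetric])
      show ?thesis unfolding l r by (simp add: algebra_simps)
    qed
  qed
qed

lemma cpsd_half:
  assumes "cpsd Q1" "cpsd Q2" shows "cpsd ((1/2) *\<^sub>R (Q1 + Q2))"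
proof -
  have h1: "herm Q1" and h2: "herm Q2" and n1: "\<And>x. 0 \<le> Re (qf Q1 x x)" and n2: "\<And>x. 0 \<le> Re (qf Q2 x x)"
    using assms cpsd_iff by auto
  show ?thesis unfolding cpsd_iff herm_qf qf_mat_scaleR qf_mat_add
  proof (intro conjI allI)
    fix x y
    show "complex_of_real (1/2) * (qf Q1 y x + qf Q2 y x) = cnj (complex_of_real (1/2) * (qf Q1 x y + qf Q2 x y))"
      by (simp add: qf_herm[OF h1, of x y] qf_herm[OF h2, of x y])
  next
    fix x
    show "0 \<le> Re (complex_of_real (1/2) * (qf Q1 x x + qf Q2 x x))" using n1[of x] n2[of x] by simp
  qed
qed

lemma trace_half: "Re (mtrace ((1/2) *\<^sub>R (Q1 + Q2))) = (Re (mtrace Q1) + Re (mtrace Q2)) / 2"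
  unfolding mtrace_def scaleR_entry vector_add_component by (simp add: sum.distrib sum_divide_distrib[symmetric] add_divide_distrib[symmetric])

theorem lemma2:
  fixes \<Sigma> :: "'m::finite \<times> 'n::finite \<Rightarrow> 'm \<times> 'n \<Rightarrow> complex"
    and \<mu> :: "(complex^'n^'m) measure"
    and sn2 p :: real
    and Q1 Q2 :: "complex^'n^'n"
  assumes "sn2 > 0" and "p > 0"
    and "cov_psd \<Sigma>" and "cscg_law \<mu> \<Sigma>"
    and "capacity_achieving \<mu> sn2 p Q1" and "capacity_achieving \<mu> sn2 p Q2"
    and "mtrace Q1 = complex_of_real p" and "mtrace Q2 = complex_of_real p"
  shows "AE H in \<mu>. H ** Q1 ** mat_adj H = H ** Q2 ** mat_adj H"
proof -
  note s = assms(1)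
  have P: "prob_space \<mu>" and sets: "sets \<mu> = sets borel" using assms(4) cscg_law_def by auto
  interpret prob_space \<mu> by (rule P)
  define f where "f Q H = ln (Re (det (mat 1 + (1/sn2) *\<^sub>R (H ** Q ** mat_adj H))))"
    for Q :: "complex^'n^'n" and H :: "complex^'n^'m"
  have cap: "capacity \<mu> sn2 Q = integral\<^sup>L \<mu> (f Q)" for Q unfolding capacity_def f_def ..
  have NHint: "integrable \<mu> NH"
  proof -
    have "integrable \<mu> (\<lambda>H. \<Sum>i\<in>UNIV. \<Sum>j\<in>UNIV. (Re (H$i$j))^2 + (Im (H$i$j))^2)"
      using cscg_moments[OF assms(3,4)] by (auto intro!: Bochner_Integration.integrable_sum Bochner_Integration.integrable_add)
    then show ?thesis unfolding NH_def[abs_def] .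
  qed
  have fm: "f Q \<in> borel_measurable \<mu>" for Q unfolding f_def using meas_f[OF sets] .
  have fnn: "cpsd Q \<Longrightarrow> 0 \<le> f Q H" for Q H unfolding f_def using f_bound(1)[OF _ s] by blast
  have fint: "integrable \<mu> (f Q)" if Q: "cpsd Q" for Q
  proof (rule Bochner_Integration.integrable_bound)
    define K where "K = real CARD('m) * ((\<Sum>l\<in>UNIV. \<Sum>k\<in>UNIV. cmod (Q$k$l)) / sn2)"
    show "integrable \<mu> (\<lambda>H. K * NH H)" using NHint by (rule integrable_mult_right)
    show "f Q \<in> borel_measurable \<mu>" by (rule fm)
    show "AE H in \<mu>. norm (f Q H) \<le> norm (K * NH H)"
    proof (rule AE_I2)
      fix H
      have "norm (f Q H) = f Q H" using fnn[OF Q] by simp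
      also have "\<dots> \<le> K * NH H" unfolding f_def K_def by (rule f_bound(2)[OF Q s])
      also have "\<dots> \<le> norm (K * NH H)" by simp
      finally show "norm (f Q H) \<le> norm (K * NH H)" .
    qed
  qed
  have c1: "cpsd Q1" and c2: "cpsd Q2" using assms(5,6) capacity_achieving_def by auto
  define Q3 where "Q3 = (1/2) *\<^sub>R (Q1 + Q2)"
  have c3: "cpsd Q3" unfolding Q3_def by (rule cpsd_half[OF c1 c2])
  have t3: "Re (mtrace Q3) \<le> p" unfolding Q3_def trace_half using assms(7,8) by simp
  have C31: "capacity \<mu> sn2 Q3 \<le> capacity \<mu> sn2 Q1" using assms(5) c3 t3 capacity_achieving_def by blast
  have C21: "capacity \<mu> sn2 Q2 \<le> capacity \<mu> sn2 Q1" using assms(5) c2 assms(6) capacity_achieving_def by blast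
  have C12: "capacity \<mu> sn2 Q1 \<le> capacity \<mu> sn2 Q2" using assms(6) c1 assms(5) capacity_achieving_def by blast
  define g where "g H = 2 * f Q3 H - f Q1 H - f Q2 H" for H
  have pw: "0 \<le> g H \<and> (g H = 0 \<longrightarrow> H ** Q1 ** mat_adj H = H ** Q2 ** mat_adj H)" for H
  proof -
    define A1 where "A1 = (1/sn2) *\<^sub>R (H ** Q1 ** mat_adj H)"
    define A2 where "A2 = (1/sn2) *\<^sub>R (H ** Q2 ** mat_adj H)"
    have p1: "pdm (mat 1 + A1)" unfolding A1_def by (rule pdm_I_plus[OF cpsd_HQH[OF c1 s]])
    have p2: "pdm (mat 1 + A2)" unfolding A2_def by (rule pdm_I_plus[OF cpsd_HQH[OF c2 s]])
    have e: "mat 1 + (1/sn2) *\<^sub>R (H ** Q3 ** mat_adj H) = (1/2) *\<^sub>R ((mat 1 + A1) + (mat 1 + A2))"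
      unfolding Q3_def A1_def A2_def by (rule M_half)
    have gH: "g H = 2 * ln (Re (det ((1/2) *\<^sub>R ((mat 1 + A1) + (mat 1 + A2))))) -
        (ln (Re (det (mat 1 + A1))) + ln (Re (det (mat 1 + A2))))"
      unfolding g_def f_def e A1_def A2_def by simp
    have L: "ln (Re (det (mat 1 + A1))) + ln (Re (det (mat 1 + A2))) \<le> 2 * ln (Re (det ((1/2) *\<^sub>R ((mat 1 + A1) + (mat 1 + A2))))) \<and>
      (ln (Re (det (mat 1 + A1))) + ln (Re (det (mat 1 + A2))) = 2 * ln (Re (det ((1/2) *\<^sub>R ((mat 1 + A1) + (mat 1 + A2))))) \<longrightarrow> mat 1 + A1 = mat 1 + A2)"
      by (rule logdet_concave[OF p1 p2])
    show ?thesis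
    proof
      show "0 \<le> g H" using L gH by simp
      show "g H = 0 \<longrightarrow> H ** Q1 ** mat_adj H = H ** Q2 ** mat_adj H"
      proof
        assume "g H = 0"
        then have "mat 1 + A1 = mat 1 + A2" using L gH by simp
        then have "A1 = A2" by simp
        then show "H ** Q1 ** mat_adj H = H ** Q2 ** mat_adj H" unfolding A1_def A2_def using s by simp
      qed
    qed
  qed
  have gint: "integrable \<mu> g" unfolding g_def
    using fint[OF c1] fint[OF c2] fint[OF c3]
    by (auto intro!: Bochner_Integration.integrable_diff Bochner_Integration.integrable_mult_right)
  have "integral\<^sup>L \<mu> g = 2 * capacity \<mu> sn2 Q3 - capacity \<mu> sn2 Q1 - capacity \<mu> sn2 Q2"
    unfolding g_def cap using fint[OF c1] fint[OF c2] fint[OF c3] by simp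
  then have "integral\<^sup>L \<mu> g \<le> 0" using C31 C21 C12 by simp
  moreover have "0 \<le> integral\<^sup>L \<mu> g" using pw by (intro integral_nonneg_AE) auto
  ultimately have "integral\<^sup>L \<mu> g = 0" by simp
  then have "AE H in \<mu>. g H = 0"
    using integral_nonneg_eq_0_iff_AE[OF gint] pw by auto
  then show ?thesis using pw by (auto elim: AE_mp)
qed


end
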